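(* Let $\mathcal{H}_n$ be an $n$-dimensional Hilbert space and let $F=\{f_i\}_{i=1}^N$ be a uniform normalized tight frame (UNTF) for $\mathcal{H}_n$. For $p>2$, the canonical dual $\{S_F^{-1}f_i\}_{i=1}^N$ of $F$ is the unique $1$-erasure Frobenius-optimal dual frame of $F$, i.e. $\zeta_{\mathfrak{F}}^{(1),p}(F)=\{S_F^{-1}F\}$. Consequently, it is also the unique $m$-erasure Frobenius-optimal dual frame of $F$, i.e. $\zeta_{\mathfrak{F}}^{(m),p}(F)=\{S_F^{-1}F\}$, for all $m\ge 1$.
   Context: A finite sequence $F=\{f_i\}_{i=1}^N$ in $\mathcal{H}_n$ is a frame if there are $0<A'\le B'$ with $A'\|f\|^2\le\sum_i|\langle f,f_i\rangle|^2\le B'\|f\|^2$ for all $f$; it is tight if one can take $A'=B'$ and Parseval if $A'=B'=1$. A uniform normalized tight frame (UNTF) is a Parseval frame all of whose vectors have the same norm (so $\|f_i\|^2=n/N$ and $S_F=I$). The analysis operator is $T_F:\mathcal{H}_n\to\mathbb{C}^N$, $T_Ff=(\langle f,f_i\rangle)_{i=1}^N$, with adjoint $T_F^*(c_i)=\sum_i c_if_i$; the frame operator is $S_F=T_F^*T_F$, and $S_F^{-1}F=\{S_F^{-1}f_i\}$ is the canonical dual. $G=\{g_i\}_{i=1}^N$ is a dual of $F$ if $T_G^*T_F=I$, i.e. $f=\sum_i\langle f,f_i\rangle g_i$ for all $f$. For $1\le m\le N$ let $\mathcal{D}^{(m)}$ be the set of $N\times N$ diagonal matrices with exactly $m$ diagonal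 entries equal to $1$ and the others $0$. For $p>1$ and a dual $G$ define \[\mathrm{AE}_{\mathfrak{F}}^{(m),p}(F,G)=\Big\{\tbinom{N}{m}^{-1}\sum_{D\in\mathcal{D}^{(m)}}\|T_G^*DT_F\|_{\mathfrak{F}}^p\Big\}^{1/p},\] where $\|\cdot\|_{\mathfrak{F}}$ is the Frobenius (Hilbert–Schmidt) norm; for $m=1$ this equals $\{\frac1N\sum_i(\|f_i\|\|g_i\|)^p\}^{1/p}$. Set $\mathrm{AE}_{\mathfrak{F}}^{(1),p}(F)=\inf\{\mathrm{AE}_{\mathfrak{F}}^{(1),p}(F,G): G\text{ dual of }F\}$ and $\zeta_{\mathfrak{F}}^{(1),p}(F)$ the set of duals attaining it ($1$-erasure Frobenius-optimal duals). Recursively, for $k>1$, $\mathrm{AE}_{\mathfrak{F}}^{(k),p}(F)=\inf\{\mathrm{AE}_{\mathfrak{F}}^{(k),p}(F,G):G\in\zeta_{\mathfrak{F}}^{(k-1),p}(F)\}$ and $\zeta_{\mathfrak{F}}^{(k),p}(F)=\{G\in\zeta_{\mathfrak{F}}^{(k-1),p}(F):\mathrm{AE}_{\mathfrak{F}}^{(k),p}(F,G)=\mathrm{AE}_{\mathfrak{F}}^{(k),p}(F)\}$ ($k$-erasure Frobenius-optimal duals). *)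

theory Defs
  imports "HOL-Analysis.Analysis"
begin

text \<open>The n-dimensional Hilbert space H_n is modelled as C^n = ('n \<Rightarrow> complex), 'n a finite
  index type with CARD('n) = n, with the standard inner product (linear in the first argument).
  A frame of N vectors is a map 'k \<Rightarrow> ('n \<Rightarrow> complex), 'k a finite index type with CARD('k) = N.\<close>

type_synonym 'n hvec = "'n \<Rightarrow> complex"

definition cinner :: "('n::finite) hvec \<Rightarrow> 'n hvec \<Rightarrow> complex" where
  "cinner x y = (\<Sum>j\<in>UNIV. x j * cnj (y j))"

definition hnorm :: "('n::finite) hvec \<Rightarrow> real" where
  "hnorm x = sqrt (\<Sum>j\<in>UNIV. (cmod (x j))\<^sup>2)"

definition is_frame :: "('k::finite \<Rightarrow> ('n::finite) hvec) \<Rightarrow> bool" where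
  "is_frame F \<longleftrightarrow> (\<exists>A B. 0 < A \<and> A \<le> B \<and>
     (\<forall>f. A * (hnorm f)\<^sup>2 \<le> (\<Sum>i\<in>UNIV. (cmod (cinner f (F i)))\<^sup>2) \<and>
          (\<Sum>i\<in>UNIV. (cmod (cinner f (F i)))\<^sup>2) \<le> B * (hnorm f)\<^sup>2))"

definition is_parseval_frame :: "('k::finite \<Rightarrow> ('n::finite) hvec) \<Rightarrow> bool" where
  "is_parseval_frame F \<longleftrightarrow>
     (\<forall>f. (\<Sum>i\<in>UNIV. (cmod (cinner f (F i)))\<^sup>2) = (hnorm f)\<^sup>2)"

definition is_UNTF :: "('k::finite \<Rightarrow> ('n::finite) hvec) \<Rightarrow> bool" where
  "is_UNTF F \<longleftrightarrow> is_frame F \<and> is_parseval_frame F \<and> (\<forall>i j. hnorm (F i) = hnorm (F j))"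

definition frame_op :: "('k::finite \<Rightarrow> ('n::finite) hvec) \<Rightarrow> 'n hvec \<Rightarrow> 'n hvec" where
  "frame_op F f = (\<lambda>j. \<Sum>i\<in>UNIV. cinner f (F i) * F i j)"

definition canonical_dual :: "('k::finite \<Rightarrow> ('n::finite) hvec) \<Rightarrow> 'k \<Rightarrow> 'n hvec" where
  "canonical_dual F i = (THE u. frame_op F u = F i)"

definition is_dual :: "('k::finite \<Rightarrow> ('n::finite) hvec) \<Rightarrow> ('k \<Rightarrow> 'n hvec) \<Rightarrow> bool" where
  "is_dual F G \<longleftrightarrow> (\<forall>f. f = (\<lambda>j. \<Sum>i\<in>UNIV. cinner f (F i) * G i j))"

text \<open>T_G^* D T_F for D the diagonal 0/1 matrix with support E.\<close>
definition erased_op :: "('k::finite \<Rightarrow> ('n::finite) hvec) \<Rightarrow> ('k \<Rightarrow> 'n hvec) \<Rightarrow> 'k set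
     \<Rightarrow> 'n hvec \<Rightarrow> 'n hvec" where
  "erased_op F G E f = (\<lambda>j. \<Sum>i\<in>E. cinner f (F i) * G i j)"

definition frob_norm :: "(('n::finite) hvec \<Rightarrow> 'n hvec) \<Rightarrow> real" where
  "frob_norm L = sqrt (\<Sum>j\<in>UNIV. (hnorm (L (\<lambda>k. if k = j then 1 else 0)))\<^sup>2)"

text \<open>AE_F^{(m),p}(F,G): the sum over D in D^(m) is the sum over subsets E of the index set with card E = m.\<close>
definition AE_frob :: "nat \<Rightarrow> real \<Rightarrow> ('k::finite \<Rightarrow> ('n::finite) hvec) \<Rightarrow> ('k \<Rightarrow> 'n hvec) \<Rightarrow> real" where
  "AE_frob m p F G = ((1 / real (CARD('k) choose m)) *
      (\<Sum>E\<in>{E::'k set. card E = m}. (frob_norm (erased_op F G E)) powr p)) powr (1 / p)"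

text \<open>zeta^{(k),p}(F): k-erasure Frobenius-optimal duals; level 0 is the set of all duals.\<close>
fun opt_duals :: "nat \<Rightarrow> real \<Rightarrow> ('k::finite \<Rightarrow> ('n::finite) hvec) \<Rightarrow> ('k \<Rightarrow> 'n hvec) set" where
  "opt_duals 0 p F = {G. is_dual F G}"
| "opt_duals (Suc k) p F =
     {G \<in> opt_duals k p F. AE_frob (Suc k) p F G = (INF G'\<in>opt_duals k p F. AE_frob (Suc k) p F G')}"

end

theory Submission
  imports Defs
begin


lemma powr_tangent:
  fixes x y r :: real
  assumes "0 \<le> x" "0 < y" "1 \<le> r"
  shows "y powr r + r * y powr (r - 1) * (x - y) \<le> x powr r"
proof (cases "x = 0")
  case True
  have "y powr r = y powr (r - 1) * y" using assms by (simp add: powr_diff)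
  then have "y powr r + r * y powr (r - 1) * (x - y) = (1 - r) * y powr r" using True by (simp add: algebra_simps)
  also have "\<dots> \<le> 0" using assms by (simp add: mult_nonpos_nonneg)
  finally show ?thesis using True by simp
next
  case False
  have "r * y powr (r - 1) * (x - y) \<le> x powr r - y powr r"
    using assms False
    by (intro convex_on_imp_above_tangent[where A = "{0<..}", OF powr_convex[OF assms(3)]])
       (auto intro!: derivative_eq_intros simp: interior_open)
  then show ?thesis by simp
qed



definition nsq :: "('n::finite) hvec \<Rightarrow> real" where
  "nsq x = (\<Sum>j\<in>UNIV. (cmod (x j))\<^sup>2)"

definition ee :: "'n \<Rightarrow> ('n::finite) hvec" where
  "ee j = (\<lambda>l. if l = j then 1 else 0)"

lemma nsq_nonneg: "0 \<le> nsq x" unfolding nsq_def by (intro sum_nonneg) auto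

lemma hnorm_nsq: "hnorm x = sqrt (nsq x)" unfolding hnorm_def nsq_def ..

lemma hnorm_sq: "(hnorm x)\<^sup>2 = nsq x" by (simp add: hnorm_nsq nsq_nonneg)

lemma cinner_ee: "cinner (ee j) y = cnj (y j)"
proof -
  have e: "(\<lambda>ja. (if ja = j then 1 else 0) * cnj (y ja)) = (\<lambda>ja. if ja = j then cnj (y j) else 0)" by auto
  show ?thesis unfolding cinner_def ee_def e by simp
qed

lemma cinner_lin: "cinner (\<lambda>l. a * x l + b * z l) y = a * cinner x y + b * cinner z y"
  unfolding cinner_def by (simp add: algebra_simps sum.distrib sum_distrib_left)

lemma cmod_sq_c: "complex_of_real ((cmod a)\<^sup>2) = a * cnj a"
  by (metis complex_norm_square)

lemma parseval_quad:
  assumes "is_parseval_frame F"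
  shows "(\<Sum>i\<in>UNIV. cinner f (F i) * cnj (cinner f (F i))) = complex_of_real (nsq f)"
proof -
  have "complex_of_real (\<Sum>i\<in>UNIV. (cmod (cinner f (F i)))\<^sup>2) = complex_of_real (nsq f)"
    using assms unfolding is_parseval_frame_def by (simp add: hnorm_sq)
  moreover have "complex_of_real (\<Sum>i\<in>UNIV. (cmod (cinner f (F i)))\<^sup>2) = (\<Sum>i\<in>UNIV. cinner f (F i) * cnj (cinner f (F i)))"
    by (simp only: of_real_sum cmod_sq_c)
  ultimately show ?thesis by simp
qed

lemma parseval_gram:
  fixes F :: "'k::finite \<Rightarrow> ('n::finite) hvec"
  assumes "is_parseval_frame F"
  shows "(\<Sum>i\<in>UNIV. cnj (F i j) * F i k) = (if j = k then 1 else 0)"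
proof -
  define A where "A j k = (\<Sum>i\<in>UNIV. cnj (F i j) * F i k)" for j k
  have q: "(\<Sum>i\<in>UNIV. (a * cnj (F i j) + b * cnj (F i k)) * cnj (a * cnj (F i j) + b * cnj (F i k)))
      = a * cnj a * A j j + a * cnj b * A j k + b * cnj a * A k j + b * cnj b * A k k" for a b j k
    unfolding A_def by (simp add: algebra_simps sum.distrib sum_distrib_left)
  have qq: "a * cnj a * A j j + a * cnj b * A j k + b * cnj a * A k j + b * cnj b * A k k
        = complex_of_real (nsq (\<lambda>l. a * ee j l + b * ee k l))" for a b j k
    using parseval_quad[OF assms, of "\<lambda>l. a * ee j l + b * ee k l"] q[of a j b k]
    by (simp add: cinner_lin cinner_ee)
  have nsq2: "nsq (\<lambda>l. a * ee j l + b * ee k l) = (if j = k then (cmod (a + b))\<^sup>2 else (cmod a)\<^sup>2 + (cmod b)\<^sup>2)" for a b j k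
  proof (cases "j = k")
    case True
    have "(cmod (a * ee j l + b * ee k l))\<^sup>2 = (if l = j then (cmod (a + b))\<^sup>2 else 0)" for l
      using True unfolding ee_def by auto
    then show ?thesis unfolding nsq_def using True by simp
  next
    case False
    have "(cmod (a * ee j l + b * ee k l))\<^sup>2 = (if l = j then (cmod a)\<^sup>2 else 0) + (if l = k then (cmod b)\<^sup>2 else 0)" for l
      using False unfolding ee_def by auto
    then show ?thesis unfolding nsq_def using False by (simp add: sum.distrib)
  qed
  have d: "A j j = 1" for j
    using qq[of 1 j 0 j] nsq2[of 1 j 0 j] by simp
  show ?thesis
  proof (cases "j = k")
    case True then show ?thesis using d unfolding A_def by simp
  next
    case False
    have e1: "A j k + A k j = 0" using qq[of 1 j 1 k] nsq2[of 1 j 1 k] False d by simp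
    have e2: "- \<i> * A j k + \<i> * A k j = 0" using qq[of 1 j \<i> k] nsq2[of 1 j \<i> k] False d by simp
    from e1 e2 have "A j k = 0" by (simp add: algebra_simps)
    then show ?thesis using False unfolding A_def by simp
  qed
qed



lemma frame_id:
  fixes F :: "'k::finite \<Rightarrow> ('n::finite) hvec"
  assumes "is_parseval_frame F"
  shows "frame_op F f = f"
proof
  fix j
  have "frame_op F f j = (\<Sum>i\<in>UNIV. (\<Sum>l\<in>UNIV. f l * cnj (F i l)) * F i j)"
    unfolding frame_op_def cinner_def by simp
  also have "\<dots> = (\<Sum>i\<in>UNIV. \<Sum>l\<in>UNIV. f l * cnj (F i l) * F i j)"
    by (simp add: sum_distrib_right)
  also have "\<dots> = (\<Sum>l\<in>UNIV. \<Sum>i\<in>UNIV. f l * cnj (F i l) * F i j)"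
    by (rule sum.swap)
  also have "\<dots> = (\<Sum>l\<in>UNIV. f l * (\<Sum>i\<in>UNIV. cnj (F i l) * F i j))"
    by (simp add: sum_distrib_left mult.assoc)
  also have "\<dots> = (\<Sum>l\<in>UNIV. if l = j then f j else 0)"
    by (intro sum.cong refl) (simp add: parseval_gram[OF assms])
  also have "\<dots> = f j" by simp
  finally show "frame_op F f j = f j" .
qed

lemma canon_dual_eq:
  assumes "is_parseval_frame F"
  shows "canonical_dual F = F"
proof
  fix i show "canonical_dual F i = F i"
    unfolding canonical_dual_def using frame_id[OF assms] by simp
qed

lemma dual_self:
  assumes "is_parseval_frame F"
  shows "is_dual F F"
  unfolding is_dual_def using frame_id[OF assms] unfolding frame_op_def by metis

lemma dual_coef:
  fixes F :: "'k::finite \<Rightarrow> ('n::finite) hvec"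
  assumes "is_dual F G"
  shows "(\<Sum>i\<in>UNIV. cnj (F i k) * G i j) = (if k = j then 1 else 0)"
proof -
  have "ee k = (\<lambda>j. \<Sum>i\<in>UNIV. cinner (ee k) (F i) * G i j)"
    using assms unfolding is_dual_def by blast
  then have "ee k j = (\<Sum>i\<in>UNIV. cinner (ee k) (F i) * G i j)" by metis
  then show ?thesis by (simp only: cinner_ee) (auto simp: ee_def)
qed

lemma dual_trace:
  fixes F :: "'k::finite \<Rightarrow> ('n::finite) hvec"
  assumes "is_dual F G"
  shows "(\<Sum>i\<in>UNIV. cinner (G i) (F i)) = of_nat CARD('n)"
proof -
  have "(\<Sum>i\<in>UNIV. cinner (G i) (F i)) = (\<Sum>k\<in>UNIV. (\<Sum>i\<in>UNIV. cnj (F i k) * G i k))"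
    unfolding cinner_def by (subst sum.swap) (simp add: mult.commute)
  also have "\<dots> = (\<Sum>k\<in>(UNIV::'n set). 1)" by (simp add: dual_coef[OF assms])
  finally show ?thesis by simp
qed

lemma cmod_diff_sq: "(cmod (a - b))\<^sup>2 = (cmod a)\<^sup>2 - 2 * Re (a * cnj b) + (cmod b)\<^sup>2"
  by (simp only: cmod_power2) (simp add: power2_eq_square algebra_simps)

lemma nsq_diff: "nsq (\<lambda>j. x j - y j) = nsq x - 2 * Re (cinner x y) + nsq y"
  unfolding nsq_def cinner_def by (simp add: cmod_diff_sq sum.distrib sum_subtractf sum_distrib_left Re_sum)

lemma nsq_zero: "nsq x = 0 \<Longrightarrow> x = (\<lambda>_. 0)"
proof -
  assume "nsq x = 0"
  then have "\<forall>j\<in>UNIV. (cmod (x j))\<^sup>2 = 0" unfolding nsq_def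
    by (subst sum_nonneg_eq_0_iff[symmetric]) auto
  then show ?thesis by auto
qed

lemma dual_dist:
  fixes F :: "'k::finite \<Rightarrow> ('n::finite) hvec"
  assumes "is_dual F G" "is_dual F F"
  shows "(\<Sum>i\<in>UNIV. nsq (G i)) = (\<Sum>i\<in>UNIV. nsq (F i)) + (\<Sum>i\<in>UNIV. nsq (\<lambda>j. G i j - F i j))"
    and "(\<Sum>i\<in>UNIV. nsq (F i)) = real CARD('n)"
proof -
  have t: "Re (\<Sum>i\<in>UNIV. cinner (H i) (F i)) = real CARD('n)" if "is_dual F H" for H
    using dual_trace[OF that] by simp
  have D: "(\<Sum>i\<in>UNIV. nsq (\<lambda>j. H i j - F i j)) = (\<Sum>i\<in>UNIV. nsq (H i)) - 2 * real CARD('n) + (\<Sum>i\<in>UNIV. nsq (F i))"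
    if "is_dual F H" for H
    using t[OF that] sum_distrib_left[of 2 "\<lambda>i. Re (cinner (H i) (F i))" UNIV, symmetric]
    by (simp add: nsq_diff sum.distrib sum_subtractf sum_distrib_left Re_sum)
  have "(\<Sum>i\<in>UNIV. nsq (\<lambda>j. F i j - F i j)) = 0" by (simp add: nsq_def)
  then show "(\<Sum>i\<in>UNIV. nsq (F i)) = real CARD('n)" using D[OF assms(2)] by simp
  then show "(\<Sum>i\<in>UNIV. nsq (G i)) = (\<Sum>i\<in>UNIV. nsq (F i)) + (\<Sum>i\<in>UNIV. nsq (\<lambda>j. G i j - F i j))"
    using D[OF assms(1)] by simp
qed

lemma frob_single:
  fixes F :: "'k::finite \<Rightarrow> ('n::finite) hvec"
  shows "frob_norm (erased_op F G {i}) = sqrt (nsq (F i) * nsq (G i))"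
proof -
  have "(hnorm (erased_op F G {i} (\<lambda>k. if k = j then 1 else 0)))\<^sup>2 = (cmod (F i j))\<^sup>2 * nsq (G i)" for j
  proof -
    have "erased_op F G {i} (\<lambda>k. if k = j then 1 else 0) = (\<lambda>l. cnj (F i j) * G i l)"
      unfolding erased_op_def using cinner_ee[of j, unfolded ee_def] by simp
    then show ?thesis
      by (simp add: hnorm_sq nsq_def norm_mult power_mult_distrib sum_distrib_left)
  qed
  then show ?thesis unfolding frob_norm_def by (simp add: nsq_def sum_distrib_right)
qed

lemma AE1:
  fixes F :: "'k::finite \<Rightarrow> ('n::finite) hvec"
  shows "AE_frob 1 p F G = ((1 / real CARD('k)) * (\<Sum>i\<in>UNIV. (sqrt (nsq (F i) * nsq (G i))) powr p)) powr (1 / p)"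
proof -
  have e: "{E::'k set. card E = 1} = (\<lambda>i. {i}) ` UNIV" by (auto simp: card_1_singleton_iff)
  have "(\<Sum>E\<in>{E::'k set. card E = 1}. (frob_norm (erased_op F G E)) powr p)
     = (\<Sum>i\<in>UNIV. (frob_norm (erased_op F G {i})) powr p)"
    unfolding e by (subst sum.reindex) (auto simp: inj_on_def)
  then show ?thesis unfolding AE_frob_def by (simp add: frob_single)
qed



lemma sqrt_powr_half: "0 \<le> x \<Longrightarrow> sqrt x powr p = x powr (p / 2)"
  by (simp add: powr_half_sqrt[symmetric] powr_powr)

lemma main_ineq:
  fixes F :: "'k::finite \<Rightarrow> ('n::finite) hvec" and p :: real
  assumes U: "is_UNTF F" and p: "p > 2" and G: "is_dual F G"
  shows "AE_frob 1 p F F \<le> AE_frob 1 p F G"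
    and "AE_frob 1 p F G \<le> AE_frob 1 p F F \<Longrightarrow> G = F"
proof -
  have P: "is_parseval_frame F" using U unfolding is_UNTF_def by blast
  have FF: "is_dual F F" by (rule dual_self[OF P])
  obtain i0 :: 'k where True by blast
  define c2 where "c2 = nsq (F i0)"
  have c2i: "nsq (F i) = c2" for i
  proof -
    have "hnorm (F i) = hnorm (F i0)" using U unfolding is_UNTF_def by blast
    then have "(hnorm (F i))\<^sup>2 = (hnorm (F i0))\<^sup>2" by simp
    then show ?thesis unfolding c2_def hnorm_sq .
  qed
  define N where "N = real CARD('k)"
  have Npos: "N > 0" unfolding N_def by simp
  have "N * c2 = real CARD('n)" using dual_dist(2)[OF FF FF] unfolding c2i N_def by simp
  then have c2pos: "c2 > 0" using Npos
    by (metis mult_pos_pos nat_less_real_le not_less_iff_gr_or_eq of_nat_0 of_nat_0_less_iff zero_less_card_finite zero_less_mult_pos)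
  define r where "r = p / 2"
  have r1: "1 \<le> r" using p unfolding r_def by simp
  define y where "y = c2 * c2"
  have ypos: "y > 0" using c2pos unfolding y_def by simp
  define D where "D = (\<Sum>i\<in>UNIV. nsq (\<lambda>j. G i j - F i j))"
  have D0: "D \<ge> 0" unfolding D_def by (intro sum_nonneg nsq_nonneg)
  have sumG: "(\<Sum>i\<in>UNIV. nsq (G i)) = N * c2 + D"
    using dual_dist(1)[OF G FF] unfolding D_def c2i N_def by simp
  define SG where "SG = (\<Sum>i\<in>UNIV. (sqrt (nsq (F i) * nsq (G i))) powr p)"
  define SF where "SF = (\<Sum>i\<in>UNIV. (sqrt (nsq (F i) * nsq (F i))) powr p)"
  have SG_eq: "SG = (\<Sum>i\<in>UNIV. (c2 * nsq (G i)) powr r)"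
    unfolding SG_def c2i r_def using c2pos
    by (intro sum.cong refl sqrt_powr_half) (simp add: nsq_nonneg)
  have SF_eq: "SF = N * y powr r"
  proof -
    have "(c2 * c2) powr (p / 2) = c2 powr p" using c2pos by (simp add: powr_mult powr_add[symmetric])
    then show ?thesis
      unfolding SF_def c2i r_def y_def N_def using c2pos by (simp add: sqrt_powr_half)
  qed
  define K where "K = r * y powr (r - 1)"
  have Kpos: "K > 0" unfolding K_def using r1 ypos by simp
  have tang: "y powr r + K * (c2 * nsq (G i) - y) \<le> (c2 * nsq (G i)) powr r" for i
    unfolding K_def using powr_tangent[of "c2 * nsq (G i)" y r] c2pos ypos r1 nsq_nonneg[of "G i"]
    by (simp add: mult.assoc)
  have "(\<Sum>i\<in>UNIV. y powr r + K * (c2 * nsq (G i) - y)) \<le> SG"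
    unfolding SG_eq by (intro sum_mono tang)
  moreover have "(\<Sum>i\<in>(UNIV::'k set). y powr r + K * (c2 * nsq (G i) - y)) = SF + K * c2 * D"
  proof -
    have "(\<Sum>i\<in>(UNIV::'k set). y powr r + K * (c2 * nsq (G i) - y))
        = N * y powr r + K * (c2 * (\<Sum>i\<in>UNIV. nsq (G i)) - N * y)"
      unfolding N_def by (simp add: sum.distrib sum_subtractf sum_distrib_left algebra_simps)
    also have "\<dots> = SF + K * c2 * D" unfolding sumG SF_eq y_def by (simp add: algebra_simps)
    finally show ?thesis .
  qed
  ultimately have key: "SF + K * c2 * D \<le> SG" by simp
  have AEG: "AE_frob 1 p F G = ((1 / N) * SG) powr (1 / p)" unfolding AE1 SG_def N_def ..
  have AEF: "AE_frob 1 p F F = ((1 / N) * SF) powr (1 / p)" unfolding AE1 SF_def N_def ..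
  have SF0: "0 \<le> SF" unfolding SF_eq using Npos by simp
  have KcD: "0 \<le> K * c2 * D" using Kpos c2pos D0 by simp
  show "AE_frob 1 p F F \<le> AE_frob 1 p F G"
    unfolding AEG AEF using p SF0 key KcD Npos
    by (intro powr_mono2) (auto simp: divide_right_mono)
  assume le: "AE_frob 1 p F G \<le> AE_frob 1 p F F"
  have "SG \<le> SF"
  proof (rule ccontr)
    assume "\<not> SG \<le> SF"
    then have "(1 / N) * SF < (1 / N) * SG" using Npos by (simp add: divide_strict_right_mono)
    then have "((1 / N) * SF) powr (1 / p) < ((1 / N) * SG) powr (1 / p)"
      using p SF0 Npos by (intro powr_less_mono2) auto
    then show False using le unfolding AEG AEF by simp
  qed
  then have "K * c2 * D \<le> 0" using key by simp
  then have "D = 0" using Kpos c2pos D0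
    by (metis mult_pos_pos order_antisym_conv zero_less_mult_iff not_le)
  then have "\<forall>i\<in>UNIV. nsq (\<lambda>j. G i j - F i j) = 0" unfolding D_def
    by (subst sum_nonneg_eq_0_iff[symmetric]) (auto simp: nsq_nonneg)
  then have "G i = F i" for i using nsq_zero[of "\<lambda>j. G i j - F i j"] by (auto simp: fun_eq_iff)
  then show "G = F" by auto
qed

lemma opt1:
  fixes F :: "'k::finite \<Rightarrow> ('n::finite) hvec" and p :: real
  assumes U: "is_UNTF F" and p: "p > 2"
  shows "opt_duals 1 p F = {F}"
proof -
  have P: "is_parseval_frame F" using U unfolding is_UNTF_def by blast
  have FF: "is_dual F F" by (rule dual_self[OF P])
  have inf: "(INF G'\<in>{G. is_dual F G}. AE_frob (Suc 0) p F G') = AE_frob 1 p F F"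
    using FF main_ineq(1)[OF U p] by (intro cInf_eq_minimum) auto
  show ?thesis
  proof (rule set_eqI)
    fix G show "G \<in> opt_duals 1 p F \<longleftrightarrow> G \<in> {F}"
      using FF main_ineq[OF U p, of G] inf by (auto simp: One_nat_def)
  qed
qed

theorem proposition3p1:
  fixes F :: "'k::finite \<Rightarrow> ('n::finite) hvec" and p :: real
  assumes "is_UNTF F" and "p > 2"
  shows "opt_duals 1 p F = {canonical_dual F}
    \<and> (\<forall>m. 1 \<le> m \<and> m \<le> CARD('k) \<longrightarrow> opt_duals m p F = {canonical_dual F})"
proof -
  have P: "is_parseval_frame F" using assms(1) unfolding is_UNTF_def by blast
  have cd: "canonical_dual F = F" by (rule canon_dual_eq[OF P])
  have all: "opt_duals m p F = {F}" if "1 \<le> m" for m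
    using that
  proof (induction m rule: dec_induct)
    case base then show ?case using opt1[OF assms] by simp
  next
    case (step m) then show ?case by auto
  qed
  have o1: "opt_duals 1 p F = {F}" by (rule all) simp
  show ?thesis unfolding cd using o1 all by blast
qed

end
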